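(* Let $\{a_i,b_i\}$, $i\in\mathbb N_+$, be pairwise disjoint two-element subsets of $U$, and let $\mathcal D_2$ be the edge-independent probabilistic graph in which $E(a_i,b_i)$ and $E(b_i,a_i)$ have marginal probability $p_{a_i,b_i}=p_{b_i,a_i}=1/i^2$ for each $i$ and all other facts have marginal probability $0$. Then $\mathcal D_2\notin\mathsf{CQ}(\mathsf{BID})$.
   Context: Fix a countably infinite universe $U$ equipped with a linear order. Facts are $R(u_1,\dots,u_{\mathrm{ar}(R)})$ with $R$ from a finite schema and $u_i\in U$; instances are finite sets of facts; $\mathrm{adom}(D)$ is the set of elements of $U$ occurring in $D$. A probabilistic database (PDB) is a discrete probability space $(\mathbb D,P)$ with $\mathbb D$ a nonempty countable set of instances; its possible worlds are the instances of positive probability, and $\mathrm{facts}(\mathcal D)$ is their union. A graph database is an instance over a single binary relation $E$; it is simple if it has no fact $E(a,a)$ and undirected if $E(a,b)\in D$ implies $E(b,a)\in D$. An edge-independent probabilistic graph is a PDB all of whose possible worlds are simple undirected graph databases and such that for every sequence of pairwise distinct two-element subsets $\{a_1,b_1\},\dots,\{a_k,b_k\}$ of $U$ the events $E(a_i,b_i)\in D$ are independent; it is determined by the marginals $p_{a,b}=\Pr(E(a,b)\in D)$. A PDB $\mathcal I$ is block-independent disjoint ($\mathsf{BID}$) if $\mathrm{facts}(\mathcal I)$ can be partitioned into blocks such that facts $f_1,\dots,f_k$ from pairwise different blocks satisfy $\Pr(f_1\in I,\dots,f_k\in I)=\prod_i\Pr(f_i\in I)$ and distinct facts $f,f'$ of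 the same block satisfy $\Pr(f\in I\text{ and }f'\in I)=0$. A conjunctive query is a formula built from relational atoms $R(\bar u)$ ($\bar u$ variables or constants) and equality atoms using only $\exists,\wedge$, evaluated under active domain semantics; a CQ-view consists of one CQ $\Phi_R(x_1,\dots,x_{\mathrm{ar}(R)})$ per output relation $R$, mapping $D$ to the instance of all $R(\bar a)$ with $\bar a$ over $\mathrm{adom}(D)\cup\mathrm{adom}(\Phi_R)$ and $D\models\Phi_R[\bar a]$. The image of a PDB under a view is the push-forward distribution; $\mathsf{CQ}(\mathsf{BID})$ is the class of images of BID-PDBs under CQ-views. *)

theory Defs
  imports "HOL-Probability.Probability" "HOL-Library.Infinite_Typeclass"
    "HOL-Library.Countable" "HOL-Library.Disjoint_Sets"
begin

type_synonym ('r,'u) fact = "'r \<times> 'u list"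
type_synonym ('r,'u) inst = "('r,'u) fact set"

definition adom :: "('r,'u) inst \<Rightarrow> 'u set" where
  "adom D = (\<Union>(R,us)\<in>D. set us)"

definition is_instance :: "'r set \<Rightarrow> ('r \<Rightarrow> nat) \<Rightarrow> ('r,'u) inst \<Rightarrow> bool" where
  "is_instance sch ar D \<longleftrightarrow> finite D \<and> (\<forall>(R,us)\<in>D. R \<in> sch \<and> length us = ar R)"

definition is_pdb :: "'r set \<Rightarrow> ('r \<Rightarrow> nat) \<Rightarrow> ('r,'u) inst pmf \<Rightarrow> bool" where
  "is_pdb sch ar I \<longleftrightarrow> (\<forall>D\<in>set_pmf I. is_instance sch ar D)"

definition pdb_facts :: "('r,'u) inst pmf \<Rightarrow> ('r,'u) fact set" where
  "pdb_facts I = \<Union>(set_pmf I)"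

definition is_BID :: "'r set \<Rightarrow> ('r \<Rightarrow> nat) \<Rightarrow> ('r,'u) inst pmf \<Rightarrow> bool" where
  "is_BID sch ar I \<longleftrightarrow> is_pdb sch ar I \<and>
    (\<exists>B. partition_on (pdb_facts I) B \<and>
      (\<forall>fs. set fs \<subseteq> pdb_facts I \<and>
          (\<forall>i<length fs. \<forall>j<length fs. i \<noteq> j \<longrightarrow> \<not> (\<exists>X\<in>B. fs!i \<in> X \<and> fs!j \<in> X)) \<longrightarrow>
          measure_pmf.prob I {D. set fs \<subseteq> D}
            = prod_list (map (\<lambda>f. measure_pmf.prob I {D. f \<in> D}) fs)) \<and>
      (\<forall>X\<in>B. \<forall>f\<in>X. \<forall>f'\<in>X. f \<noteq> f' \<longrightarrow> measure_pmf.prob I {D. f \<in> D \<and> f' \<in> D} = 0))"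

datatype 'u cq_term = Var nat | Const 'u

datatype ('r,'u) cq =
    Atom 'r "'u cq_term list"
  | Eq "'u cq_term" "'u cq_term"
  | Conj "('r,'u) cq" "('r,'u) cq"
  | Exists nat "('r,'u) cq"

fun tval :: "(nat \<Rightarrow> 'u) \<Rightarrow> 'u cq_term \<Rightarrow> 'u" where
  "tval v (Var x) = v x"
| "tval v (Const c) = c"

fun cq_sat :: "('r,'u) inst \<Rightarrow> 'u set \<Rightarrow> ('r,'u) cq \<Rightarrow> (nat \<Rightarrow> 'u) \<Rightarrow> bool" where
  "cq_sat D Dom (Atom R ts) v \<longleftrightarrow> (R, map (tval v) ts) \<in> D"
| "cq_sat D Dom (Eq s t) v \<longleftrightarrow> tval v s = tval v t"
| "cq_sat D Dom (Conj \<phi> \<psi>) v \<longleftrightarrow> cq_sat D Dom \<phi> v \<and> cq_sat D Dom \<psi> v"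
| "cq_sat D Dom (Exists x \<phi>) v \<longleftrightarrow> (\<exists>c\<in>Dom. cq_sat D Dom \<phi> (v(x := c)))"

fun term_consts :: "'u cq_term \<Rightarrow> 'u set" where
  "term_consts (Var x) = {}"
| "term_consts (Const c) = {c}"

fun term_vars :: "'u cq_term \<Rightarrow> nat set" where
  "term_vars (Var x) = {x}"
| "term_vars (Const c) = {}"

fun cq_consts :: "('r,'u) cq \<Rightarrow> 'u set" where
  "cq_consts (Atom R ts) = (\<Union>t\<in>set ts. term_consts t)"
| "cq_consts (Eq s t) = term_consts s \<union> term_consts t"
| "cq_consts (Conj \<phi> \<psi>) = cq_consts \<phi> \<union> cq_consts \<psi>"
| "cq_consts (Exists x \<phi>) = cq_consts \<phi>"

fun cq_fv :: "('r,'u) cq \<Rightarrow> nat set" where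
  "cq_fv (Atom R ts) = (\<Union>t\<in>set ts. term_vars t)"
| "cq_fv (Eq s t) = term_vars s \<union> term_vars t"
| "cq_fv (Conj \<phi> \<psi>) = cq_fv \<phi> \<union> cq_fv \<psi>"
| "cq_fv (Exists x \<phi>) = cq_fv \<phi> - {x}"

fun cq_wf :: "'r set \<Rightarrow> ('r \<Rightarrow> nat) \<Rightarrow> ('r,'u) cq \<Rightarrow> bool" where
  "cq_wf sch ar (Atom R ts) \<longleftrightarrow> R \<in> sch \<and> length ts = ar R"
| "cq_wf sch ar (Eq s t) \<longleftrightarrow> True"
| "cq_wf sch ar (Conj \<phi> \<psi>) \<longleftrightarrow> cq_wf sch ar \<phi> \<and> cq_wf sch ar \<psi>"
| "cq_wf sch ar (Exists x \<phi>) \<longleftrightarrow> cq_wf sch ar \<phi>"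

text \<open>A CQ-view into the graph schema {E}: one CQ \<open>\<Phi>_E(x_1,x_2)\<close>, where the
  free variables x_1, x_2 are \<open>Var 0\<close>, \<open>Var 1\<close>. A graph database (instance over
  the single binary relation E) is represented by its set of pairs (a,b) with E(a,b).\<close>

definition is_CQ_view_E :: "'r set \<Rightarrow> ('r \<Rightarrow> nat) \<Rightarrow> ('r,'u) cq \<Rightarrow> bool" where
  "is_CQ_view_E sch ar \<Phi> \<longleftrightarrow> cq_wf sch ar \<Phi> \<and> cq_fv \<Phi> \<subseteq> {0, 1}"

definition cq_view_E :: "('r,'u) cq \<Rightarrow> ('r,'u) inst \<Rightarrow> ('u \<times> 'u) set" where
  "cq_view_E \<Phi> D =
     {(a, b). a \<in> adom D \<union> cq_consts \<Phi> \<and> b \<in> adom D \<union> cq_consts \<Phi> \<and>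
              cq_sat D (adom D \<union> cq_consts \<Phi>) \<Phi> ((\<lambda>_. undefined)(0 := a, 1 := b))}"

definition edge_indep_graph :: "('u \<times> 'u) set pmf \<Rightarrow> bool" where
  "edge_indep_graph G \<longleftrightarrow>
     (\<forall>D\<in>set_pmf G. finite D \<and> (\<forall>(a,b)\<in>D. a \<noteq> b \<and> (b,a) \<in> D)) \<and>
     (\<forall>ps. (\<forall>(a,b)\<in>set ps. a \<noteq> b) \<and> distinct (map (\<lambda>(a,b). {a,b}) ps) \<longrightarrow>
        measure_pmf.prob G {D. \<forall>p\<in>set ps. p \<in> D}
          = prod_list (map (\<lambda>p. measure_pmf.prob G {D. p \<in> D}) ps))"

end

theory Submission
  imports Defs "HOL-Analysis.Harmonic_Numbers"
begin

lemma pmf_finite_approx: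
  fixes M :: "'a pmf"
  assumes "e > 0"
  shows "\<exists>W. finite W \<and> W \<subseteq> A \<inter> set_pmf M \<and> measure_pmf.prob M W > measure_pmf.prob M A - e"
proof -
  let ?A = "A \<inter> set_pmf M"
  have "Infinite_Set_Sum.abs_summable_on (pmf M) ?A" by (rule pmf_abs_summable)
  hence ab: "Infinite_Sum.abs_summable_on (pmf M) ?A" using abs_summable_equivalent by blast
  hence sm: "pmf M summable_on ?A" using abs_summable_summable by blast
  have e1: "measure_pmf.prob M (A \<inter> set_pmf M) = measure_pmf.prob M A" by (rule measure_Int_set_pmf)
  have e2: "measure_pmf.prob M ?A = infsetsum (pmf M) ?A" by (rule measure_pmf_conv_infsetsum)
  have e3: "infsetsum (pmf M) ?A = infsum (pmf M) ?A" by (rule infsetsum_infsum[OF pmf_abs_summable])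
  have eq: "measure_pmf.prob M A = infsum (pmf M) ?A"
    using e1 e2 e3 by linarith
  have "(pmf M has_sum measure_pmf.prob M A) ?A" using has_sum_infsum[OF sm] eq by simp
  hence "(sum (pmf M) \<longlongrightarrow> measure_pmf.prob M A) (finite_subsets_at_top ?A)"
    by (simp add: has_sum_def)
  hence "eventually (\<lambda>W. dist (sum (pmf M) W) (measure_pmf.prob M A) < e) (finite_subsets_at_top ?A)"
    using assms tendstoD by blast
  then obtain W where W: "finite W" "W \<subseteq> ?A" "dist (sum (pmf M) W) (measure_pmf.prob M A) < e"
    unfolding eventually_finite_subsets_at_top by blast
  have "measure_pmf.prob M W = sum (pmf M) W" using W(1) measure_measure_pmf_finite by blast
  moreover have "measure_pmf.prob M A - e < sum (pmf M) W" using W(3) unfolding dist_real_def by linarith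
  ultimately show ?thesis using W(1,2) by metis
qed

definition upd_set :: "(nat \<Rightarrow> 'u) \<Rightarrow> nat set \<Rightarrow> 'u \<Rightarrow> nat \<Rightarrow> 'u" where
  "upd_set v Y c = (\<lambda>z. if z \<in> Y then c else v z)"

lemma tval_cong: "(\<forall>z\<in>term_vars t. v z = w z) \<Longrightarrow> tval v t = tval w t"
  by (cases t) auto

lemma cq_sat_cong: "(\<forall>z\<in>cq_fv \<phi>. v z = w z) \<Longrightarrow> cq_sat D Dom \<phi> v = cq_sat D Dom \<phi> w"
proof (induction \<phi> arbitrary: v w)
  case (Atom R ts)
  have "\<forall>t\<in>set ts. tval v t = tval w t" using Atom by (auto intro!: tval_cong)
  hence "map (tval v) ts = map (tval w) ts" by (simp add: map_eq_conv)
  then show ?case by (metis cq_sat.simps(1))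
next
  case (Eq s t)
  then show ?case using tval_cong[of s v w] tval_cong[of t v w] by auto
next
  case (Conj \<phi> \<psi>)
  have "cq_sat D Dom \<phi> v = cq_sat D Dom \<phi> w" using Conj.IH(1)[of v w] Conj.prems by auto
  moreover have "cq_sat D Dom \<psi> v = cq_sat D Dom \<psi> w" using Conj.IH(2)[of v w] Conj.prems by auto
  ultimately show ?case by simp
next
  case (Exists x \<phi>)
  have "\<And>c. cq_sat D Dom \<phi> (v(x:=c)) = cq_sat D Dom \<phi> (w(x:=c))"
    using Exists by (intro Exists.IH) auto
  then show ?case by simp
qed

lemma finite_term_vars: "finite (term_vars t)" by (cases t) auto

lemma finite_cq_fv: "finite (cq_fv \<phi>)"
  by (induction \<phi>) (auto simp: finite_term_vars)

lemma term_vars_Var: "x \<in> term_vars t \<Longrightarrow> t = Var x" by (cases t) auto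

definition ANC :: "('r,'u) cq \<Rightarrow> nat \<Rightarrow> bool" where
  "ANC \<phi> x \<longleftrightarrow> (\<exists>R p. \<forall>D Dom v. cq_sat D Dom \<phi> v \<longrightarrow> (\<exists>us. (R,us)\<in>D \<and> p < length us \<and> us!p = v x))"
definition CST :: "('r,'u) cq \<Rightarrow> nat \<Rightarrow> bool" where
  "CST \<phi> x \<longleftrightarrow> (\<exists>c. \<forall>D Dom v. cq_sat D Dom \<phi> v \<longrightarrow> v x = c)"
definition FREE :: "('r,'u) cq \<Rightarrow> nat set \<Rightarrow> bool" where
  "FREE \<phi> Y \<longleftrightarrow> (\<forall>D Dom v c. c \<in> Dom \<longrightarrow> cq_sat D Dom \<phi> v \<longrightarrow> cq_sat D Dom \<phi> (upd_set v Y c))"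
definition EQV :: "('r,'u) cq \<Rightarrow> nat \<Rightarrow> nat \<Rightarrow> bool" where
  "EQV \<phi> x y \<longleftrightarrow> (\<forall>D Dom v. cq_sat D Dom \<phi> v \<longrightarrow> v y = v x)"
definition FR :: "('r,'u) cq \<Rightarrow> nat \<Rightarrow> bool" where
  "FR \<phi> x \<longleftrightarrow> (\<exists>Y. x \<in> Y \<and> Y \<subseteq> insert x (cq_fv \<phi>) \<and> FREE \<phi> Y \<and> (\<forall>y\<in>Y. EQV \<phi> x y))"

lemma FREE_disj: "Y \<inter> cq_fv \<phi> = {} \<Longrightarrow> FREE \<phi> Y"
  unfolding FREE_def
proof (intro allI impI)
  fix D Dom v c assume "Y \<inter> cq_fv \<phi> = {}" "cq_sat D Dom \<phi> v"
  moreover have "\<forall>z\<in>cq_fv \<phi>. upd_set v Y c z = v z" using \<open>Y \<inter> cq_fv \<phi> = {}\<close> by (auto simp: upd_set_def)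
  ultimately show "cq_sat D Dom \<phi> (upd_set v Y c)" using cq_sat_cong by metis
qed

lemma FR_notin: "x \<notin> cq_fv \<phi> \<Longrightarrow> FR \<phi> x"
  unfolding FR_def by (rule exI[of _ "{x}"]) (auto intro!: FREE_disj simp: EQV_def)

lemma FREE_empty: "FREE \<phi> {}"
  unfolding FREE_def upd_set_def by simp

lemma FREE_Un: "FREE \<phi> A \<Longrightarrow> FREE \<phi> B \<Longrightarrow> FREE \<phi> (A \<union> B)"
  unfolding FREE_def
proof (intro allI impI)
  fix D Dom v c assume A: "\<forall>D Dom v c. c \<in> Dom \<longrightarrow> cq_sat D Dom \<phi> v \<longrightarrow> cq_sat D Dom \<phi> (upd_set v A c)"
    and B: "\<forall>D Dom v c. c \<in> Dom \<longrightarrow> cq_sat D Dom \<phi> v \<longrightarrow> cq_sat D Dom \<phi> (upd_set v B c)"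
    and c: "c \<in> Dom" and s: "cq_sat D Dom \<phi> v"
  have "cq_sat D Dom \<phi> (upd_set (upd_set v A c) B c)" using A B c s by blast
  moreover have "upd_set (upd_set v A c) B c = upd_set v (A \<union> B) c" by (auto simp: upd_set_def)
  ultimately show "cq_sat D Dom \<phi> (upd_set v (A \<union> B) c)" by simp
qed

lemma FREE_UN: "finite K \<Longrightarrow> (\<forall>y\<in>K. FREE \<phi> (Y y)) \<Longrightarrow> FREE \<phi> (\<Union>y\<in>K. Y y)"
  by (induction K rule: finite_induct) (auto intro: FREE_Un FREE_empty)

lemma structure_lemma: fixes \<phi> :: "('r,'u) cq" shows "ANC \<phi> x \<or> CST \<phi> x \<or> FR \<phi> x"
proof (induction \<phi> arbitrary: x)
  case (Atom R ts)
  show ?case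
  proof (cases "Var x \<in> set ts")
    case True
    then obtain p where p: "p < length ts" "ts ! p = Var x" by (metis in_set_conv_nth)
    have "ANC (Atom R ts) x" unfolding ANC_def
      by (rule exI[of _ R], rule exI[of _ p]) (use p in auto)
    then show ?thesis by blast
  next
    case False
    have "x \<notin> cq_fv (Atom R ts)"
    proof
      assume "x \<in> cq_fv (Atom R ts)"
      then obtain t where "t \<in> set ts" "x \<in> term_vars t" by auto
      then have "t = Var x" using term_vars_Var by blast
      then show False using False \<open>t \<in> set ts\<close> by simp
    qed
    then show ?thesis using FR_notin by blast
  qed
next
  case (Eq s t)
  let ?e = "Eq s t :: ('r,'u) cq"
  show ?case
  proof (cases "x \<in> cq_fv ?e")
    case False then have "FR ?e x" by (rule FR_notin)
    then show ?thesis by blast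
  next
    case True
    show ?thesis
    proof (cases s)
      case (Var y1) note s = this
      show ?thesis
      proof (cases t)
        case (Var y2)
        have "FR ?e x" unfolding FR_def
          apply (rule exI[of _ "{y1,y2}"])
          using True s Var by (auto simp: FREE_def EQV_def upd_set_def)
        then show ?thesis by blast
      next
        case (Const c)
        have "CST ?e x" unfolding CST_def
          apply (rule exI[of _ c]) using True s Const by auto
        then show ?thesis by blast
      qed
    next
      case (Const c) note s = this
      show ?thesis
      proof (cases t)
        case (Var y2)
        have "CST ?e x" unfolding CST_def
          apply (rule exI[of _ c]) using True s Var by auto
        then show ?thesis by blast
      next
        case (Const d)
        then show ?thesis using True s by simp
      qed
    qed
  qed
next
  case (Conj \<phi> \<psi>)
  define K where "K = {y \<in> insert x (cq_fv (Conj \<phi> \<psi>)). EQV (Conj \<phi> \<psi>) x y}"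
  have finK: "finite K" unfolding K_def using finite_cq_fv[of "Conj \<phi> \<psi>"] by auto
  have xK: "x \<in> K" unfolding K_def EQV_def by auto
  show ?case
  proof (cases "\<exists>y\<in>K. ANC \<phi> y \<or> ANC \<psi> y \<or> CST \<phi> y \<or> CST \<psi> y")
    case True
    then obtain y where y: "y \<in> K" and h: "ANC \<phi> y \<or> ANC \<psi> y \<or> CST \<phi> y \<or> CST \<psi> y" by blast
    have eq: "\<And>D Dom v. cq_sat D Dom (Conj \<phi> \<psi>) v \<Longrightarrow> v y = v x"
      using y unfolding K_def EQV_def by blast
    have "ANC (Conj \<phi> \<psi>) x \<or> CST (Conj \<phi> \<psi>) x"
    proof (cases "ANC \<phi> y \<or> ANC \<psi> y")
      case True
      then obtain R p where Rp: "(\<forall>D Dom v. cq_sat D Dom \<phi> v \<longrightarrow> (\<exists>us. (R,us)\<in>D \<and> p < length us \<and> us!p = v y))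
         \<or> (\<forall>D Dom v. cq_sat D Dom \<psi> v \<longrightarrow> (\<exists>us. (R,us)\<in>D \<and> p < length us \<and> us!p = v y))"
        unfolding ANC_def by blast
      have "\<forall>D Dom v. cq_sat D Dom (Conj \<phi> \<psi>) v \<longrightarrow> (\<exists>us. (R,us)\<in>D \<and> p < length us \<and> us!p = v x)"
      proof (intro allI impI)
        fix D Dom v assume a: "cq_sat D Dom (Conj \<phi> \<psi>) v"
        then have "v y = v x" using eq by blast
        moreover have "cq_sat D Dom \<phi> v" "cq_sat D Dom \<psi> v" using a by auto
        ultimately show "\<exists>us. (R,us)\<in>D \<and> p < length us \<and> us!p = v x" using Rp by metis
      qed
      then show ?thesis unfolding ANC_def by blast
    next
      case False
      then have "CST \<phi> y \<or> CST \<psi> y" using h by blast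
      then obtain c where c: "(\<forall>D Dom v. cq_sat D Dom \<phi> v \<longrightarrow> v y = c) \<or> (\<forall>D Dom v. cq_sat D Dom \<psi> v \<longrightarrow> v y = c)"
        unfolding CST_def by blast
      have "\<forall>D Dom v. cq_sat D Dom (Conj \<phi> \<psi>) v \<longrightarrow> v x = c"
      proof (intro allI impI)
        fix D Dom v assume a: "cq_sat D Dom (Conj \<phi> \<psi>) v"
        then have "v y = v x" using eq by blast
        moreover have "cq_sat D Dom \<phi> v" "cq_sat D Dom \<psi> v" using a by auto
        ultimately show "v x = c" using c by metis
      qed
      then show ?thesis unfolding CST_def by blast
    qed
    then show ?thesis by blast
  next
    case False
    have FRs: "FR \<phi> y \<and> FR \<psi> y" if "y \<in> K" for y
    proof -
      have "\<not> (ANC \<phi> y \<or> ANC \<psi> y \<or> CST \<phi> y \<or> CST \<psi> y)" using False that by blast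
      moreover have "ANC \<phi> y \<or> CST \<phi> y \<or> FR \<phi> y" by (rule Conj.IH(1))
      moreover have "ANC \<psi> y \<or> CST \<psi> y \<or> FR \<psi> y" by (rule Conj.IH(2))
      ultimately show ?thesis by blast
    qed
    define P1 where "P1 = (\<lambda>y Y. y \<in> Y \<and> Y \<subseteq> insert y (cq_fv \<phi>) \<and> FREE \<phi> Y \<and> (\<forall>z\<in>Y. EQV \<phi> y z))"
    define P2 where "P2 = (\<lambda>y Y. y \<in> Y \<and> Y \<subseteq> insert y (cq_fv \<psi>) \<and> FREE \<psi> Y \<and> (\<forall>z\<in>Y. EQV \<psi> y z))"
    have "\<forall>y\<in>K. \<exists>Y. P1 y Y" using FRs unfolding FR_def P1_def by blast
    then obtain Y1 where Y1: "\<forall>y\<in>K. P1 y (Y1 y)" by (rule bchoice[THEN exE])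
    have "\<forall>y\<in>K. \<exists>Y. P2 y Y" using FRs unfolding FR_def P2_def by blast
    then obtain Y2 where Y2: "\<forall>y\<in>K. P2 y (Y2 y)" by (rule bchoice[THEN exE])
    have inK: "z \<in> K" if y: "y \<in> K" and z: "z \<in> Y" and
      sub: "Y \<subseteq> insert y (cq_fv ch)" and eqv: "EQV ch y z" and
      chi: "ch = \<phi> \<or> ch = \<psi>" for y z Y ch
    proof -
      have "cq_fv ch \<subseteq> cq_fv (Conj \<phi> \<psi>)" using chi by auto
      moreover have "y \<in> insert x (cq_fv (Conj \<phi> \<psi>))" using y unfolding K_def by blast
      ultimately have "z \<in> insert x (cq_fv (Conj \<phi> \<psi>))" using z sub by blast
      moreover have "EQV (Conj \<phi> \<psi>) x z" unfolding EQV_def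
      proof (intro allI impI)
        fix D Dom v assume a: "cq_sat D Dom (Conj \<phi> \<psi>) v"
        have "v y = v x" using y a unfolding K_def EQV_def by blast
        moreover have "cq_sat D Dom ch v" using a chi by auto
        then have "v z = v y" using eqv unfolding EQV_def by blast
        ultimately show "v z = v x" by simp
      qed
      ultimately show ?thesis unfolding K_def by blast
    qed
    have K1: "K = (\<Union>y\<in>K. Y1 y)"
    proof
      show "K \<subseteq> (\<Union>y\<in>K. Y1 y)" using Y1 unfolding P1_def by blast
      show "(\<Union>y\<in>K. Y1 y) \<subseteq> K"
      proof
        fix z assume "z \<in> (\<Union>y\<in>K. Y1 y)"
        then obtain y where y: "y \<in> K" "z \<in> Y1 y" by blast
        have "P1 y (Y1 y)" using Y1 y by blast
        then show "z \<in> K" using inK[OF y(1) y(2), of \<phi>] y(2) unfolding P1_def by blast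
      qed
    qed
    have K2: "K = (\<Union>y\<in>K. Y2 y)"
    proof
      show "K \<subseteq> (\<Union>y\<in>K. Y2 y)" using Y2 unfolding P2_def by blast
      show "(\<Union>y\<in>K. Y2 y) \<subseteq> K"
      proof
        fix z assume "z \<in> (\<Union>y\<in>K. Y2 y)"
        then obtain y where y: "y \<in> K" "z \<in> Y2 y" by blast
        have "P2 y (Y2 y)" using Y2 y by blast
        then show "z \<in> K" using inK[OF y(1) y(2), of \<psi>] y(2) unfolding P2_def by blast
      qed
    qed
    have "FREE \<phi> (\<Union>y\<in>K. Y1 y)" using FREE_UN[OF finK, of \<phi> Y1] Y1 unfolding P1_def by blast
    then have F1: "FREE \<phi> K" using K1 by simp
    have "FREE \<psi> (\<Union>y\<in>K. Y2 y)" using FREE_UN[OF finK, of \<psi> Y2] Y2 unfolding P2_def by blast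
    then have F2: "FREE \<psi> K" using K2 by simp
    have "FREE (Conj \<phi> \<psi>) K" using F1 F2 unfolding FREE_def by simp
    moreover have "K \<subseteq> insert x (cq_fv (Conj \<phi> \<psi>))" unfolding K_def by blast
    moreover have "\<forall>y\<in>K. EQV (Conj \<phi> \<psi>) x y" unfolding K_def by blast
    ultimately have "FR (Conj \<phi> \<psi>) x" unfolding FR_def using xK by blast
    then show ?thesis by blast
  qed
next
  case (Exists z \<psi>)
  show ?case
  proof (cases "z = x")
    case True
    then show ?thesis using FR_notin[of x "Exists z \<psi>"] by simp
  next
    case False
    from Exists.IH[of x] show ?thesis
    proof (elim disjE)
      assume "ANC \<psi> x"
      then obtain R p where Rp: "\<forall>D Dom v. cq_sat D Dom \<psi> v \<longrightarrow> (\<exists>us. (R,us)\<in>D \<and> p < length us \<and> us!p = v x)"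
        unfolding ANC_def by blast
      have "ANC (Exists z \<psi>) x" unfolding ANC_def
      proof (rule exI[of _ R], rule exI[of _ p], intro allI impI)
        fix D Dom v assume "cq_sat D Dom (Exists z \<psi>) v"
        then obtain c where "cq_sat D Dom \<psi> (v(z:=c))" by auto
        then have "\<exists>us. (R,us)\<in>D \<and> p < length us \<and> us!p = (v(z:=c)) x" using Rp by blast
        moreover have "(v(z:=c)) x = v x" using False by simp
        ultimately show "\<exists>us. (R,us)\<in>D \<and> p < length us \<and> us!p = v x" by simp
      qed
      then show ?thesis by blast
    next
      assume "CST \<psi> x"
      then obtain d where d: "\<forall>D Dom v. cq_sat D Dom \<psi> v \<longrightarrow> v x = d" unfolding CST_def by blast
      have "CST (Exists z \<psi>) x" unfolding CST_def
      proof (intro exI allI impI)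
        fix D Dom v assume "cq_sat D Dom (Exists z \<psi>) v"
        then obtain c where "cq_sat D Dom \<psi> (v(z:=c))" by auto
        then have "(v(z:=c)) x = d" using d by blast
        then show "v x = d" using False by simp
      qed
      then show ?thesis by blast
    next
      assume "FR \<psi> x"
      then obtain Y where Y: "x \<in> Y" "Y \<subseteq> insert x (cq_fv \<psi>)" "FREE \<psi> Y" "\<forall>y\<in>Y. EQV \<psi> x y"
        unfolding FR_def by blast
      have FR1: "FREE (Exists z \<psi>) (Y - {z})" unfolding FREE_def
      proof (intro allI impI)
        fix D Dom v c assume c: "c \<in> Dom" and s: "cq_sat D Dom (Exists z \<psi>) v"
        then obtain c' where c': "c' \<in> Dom" "cq_sat D Dom \<psi> (v(z:=c'))" by auto
        have "cq_sat D Dom \<psi> (upd_set (v(z:=c')) Y c)" using Y(3) c c' unfolding FREE_def by blast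
        moreover have "upd_set (v(z:=c')) Y c = (upd_set v (Y - {z}) c)(z := (if z \<in> Y then c else c'))"
          by (auto simp: upd_set_def)
        moreover have "(if z \<in> Y then c else c') \<in> Dom" using c c' by simp
        ultimately have "cq_sat D Dom \<psi> ((upd_set v (Y - {z}) c)(z := (if z \<in> Y then c else c')))"
          "(if z \<in> Y then c else c') \<in> Dom" by simp_all
        then show "cq_sat D Dom (Exists z \<psi>) (upd_set v (Y - {z}) c)"
          unfolding cq_sat.simps by blast
      qed
      have FR2: "\<forall>y\<in>Y - {z}. EQV (Exists z \<psi>) x y"
      proof (intro ballI)
        fix y assume y: "y \<in> Y - {z}"
        show "EQV (Exists z \<psi>) x y" unfolding EQV_def
        proof (intro allI impI)
          fix D Dom v assume "cq_sat D Dom (Exists z \<psi>) v"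
          then obtain c where "cq_sat D Dom \<psi> (v(z:=c))" by (auto simp del: fun_upd_apply)
          then have "(v(z:=c)) y = (v(z:=c)) x" using Y(4) y unfolding EQV_def by blast
          moreover have "(v(z:=c)) y = v y" "(v(z:=c)) x = v x" using y False by auto
          ultimately show "v y = v x" by simp
        qed
      qed
      have FR3: "x \<in> Y - {z}" using Y(1) False by blast
      have FR4: "Y - {z} \<subseteq> insert x (cq_fv (Exists z \<psi>))" using Y(2) by auto
      have "FR (Exists z \<psi>) x" unfolding FR_def
        by (rule exI[of _ "Y - {z}"]) (intro conjI FR1 FR2 FR3 FR4)
      then show ?thesis by blast
    qed
  qed
qed

lemma second_moment:
  fixes M :: "'f set pmf" and F :: "'f set"
  assumes fin: "finite F"
    and pair: "\<And>f g. f\<in>F \<Longrightarrow> g\<in>F \<Longrightarrow> f\<noteq>g \<Longrightarrow>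
       measure_pmf.prob M {D. f\<in>D \<and> g\<in>D} \<le> measure_pmf.prob M {D. f\<in>D} * measure_pmf.prob M {D. g\<in>D}"
    and pos: "(\<Sum>f\<in>F. measure_pmf.prob M {D. f\<in>D}) > 0"
  shows "measure_pmf.prob M {D. real (card (D \<inter> F)) < (\<Sum>f\<in>F. measure_pmf.prob M {D. f\<in>D}) / 2}
           \<le> 4 / (\<Sum>f\<in>F. measure_pmf.prob M {D. f\<in>D})"
proof -
  define p where "p f = measure_pmf.prob M {D. f\<in>D}" for f
  define \<mu> where "\<mu> = (\<Sum>f\<in>F. p f)"
  define ind where "ind (f::'f) (D::'f set) = (indicator {D. f \<in> D} D :: real)" for f D
  define X where "X D = (\<Sum>f\<in>F. ind f D)" for D
  have int_any: "integrable (measure_pmf M) h" if "\<And>D. \<bar>h D\<bar> \<le> B" for h :: "'f set \<Rightarrow> real" and B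
    by (rule measure_pmf.integrable_const_bound[where B=B]) (use that in auto)
  have ind_int: "integrable (measure_pmf M) (ind f)" for f
    by (rule int_any[where B=1]) (auto simp: ind_def indicator_def)
  have E_ind: "measure_pmf.expectation M (ind f) = p f" for f
    unfolding ind_def p_def by simp
  have X_card: "X D = real (card (D \<inter> F))" for D
  proof -
    have "X D = (\<Sum>f\<in>F. if f \<in> D then 1 else 0)" unfolding X_def ind_def by (simp add: indicator_def of_bool_def)
    also have "\<dots> = (\<Sum>f\<in>F \<inter> D. 1)" using sum.inter_restrict[OF fin, of "\<lambda>_. 1::real" D] by simp
    also have "\<dots> = real (card (D \<inter> F))" by (simp add: Int_commute)
    finally show ?thesis .
  qed
  have X_bound: "\<bar>X D\<bar> \<le> real (card F)" for D
  proof -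
    have "card (D \<inter> F) \<le> card F" using fin by (simp add: card_mono)
    then show ?thesis using X_card by simp
  qed
  have X_int: "integrable (measure_pmf M) X" by (rule int_any[OF X_bound])
  have X2_int: "integrable (measure_pmf M) (\<lambda>D. (X D)\<^sup>2)"
  proof (rule int_any[where B="real (card F) ^ 2"])
    fix D
    have "\<bar>X D\<bar>^2 \<le> real (card F) ^ 2" using X_bound[of D] by (intro power_mono) auto
    then show "\<bar>(X D)\<^sup>2\<bar> \<le> real (card F) ^ 2" by simp
  qed
  have EX: "measure_pmf.expectation M X = \<mu>"
  proof -
    have "measure_pmf.expectation M X = (\<Sum>f\<in>F. measure_pmf.expectation M (ind f))"
      unfolding X_def using ind_int by (simp add: integral_sum)
    then show ?thesis unfolding \<mu>_def using E_ind by simp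
  qed
  define q where "q f g = measure_pmf.prob M {D. f\<in>D \<and> g\<in>D}" for f g
  have X2: "(X D)\<^sup>2 = (\<Sum>f\<in>F. \<Sum>g\<in>F. indicator {D. f\<in>D \<and> g\<in>D} D)" for D
  proof -
    have "(X D)\<^sup>2 = (\<Sum>f\<in>F. \<Sum>g\<in>F. ind f D * ind g D)"
      unfolding X_def power2_eq_square by (rule sum_product)
    also have "\<dots> = (\<Sum>f\<in>F. \<Sum>g\<in>F. indicator {D. f\<in>D \<and> g\<in>D} D)"
      by (intro sum.cong refl) (simp add: ind_def indicator_def of_bool_def)
    finally show ?thesis .
  qed
  have int2: "integrable (measure_pmf M) (\<lambda>D. indicator {D. f\<in>D \<and> g\<in>D} D :: real)" for f g
    by (rule int_any[where B=1]) (auto simp: indicator_def)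
  have EX2: "measure_pmf.expectation M (\<lambda>D. (X D)\<^sup>2) = (\<Sum>f\<in>F. \<Sum>g\<in>F. q f g)"
  proof -
    have "measure_pmf.expectation M (\<lambda>D. (X D)\<^sup>2)
        = measure_pmf.expectation M (\<lambda>D. \<Sum>f\<in>F. \<Sum>g\<in>F. indicator {D. f\<in>D \<and> g\<in>D} D)"
      by (simp only: X2)
    also have "\<dots> = (\<Sum>f\<in>F. measure_pmf.expectation M (\<lambda>D. \<Sum>g\<in>F. indicator {D. f\<in>D \<and> g\<in>D} D))"
      by (rule Bochner_Integration.integral_sum) (auto intro!: Bochner_Integration.integrable_sum int2)
    also have "\<dots> = (\<Sum>f\<in>F. \<Sum>g\<in>F. measure_pmf.expectation M (\<lambda>D. indicator {D. f\<in>D \<and> g\<in>D} D))"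
      by (intro sum.cong refl Bochner_Integration.integral_sum int2)
    also have "\<dots> = (\<Sum>f\<in>F. \<Sum>g\<in>F. q f g)"
      unfolding q_def by simp
    finally show ?thesis .
  qed
  have qle: "q f g \<le> (if f = g then p f else 0) + p f * p g" if "f \<in> F" "g \<in> F" for f g
  proof (cases "f = g")
    case True
    then have "q f g = p f" unfolding q_def p_def by simp
    moreover have "p f * p g \<ge> 0" unfolding p_def by simp
    ultimately show ?thesis using True by simp
  next
    case False
    then show ?thesis using pair[OF that False] unfolding q_def p_def by simp
  qed
  have "(\<Sum>f\<in>F. \<Sum>g\<in>F. q f g) \<le> (\<Sum>f\<in>F. \<Sum>g\<in>F. (if f = g then p f else 0) + p f * p g)"
    by (intro sum_mono qle)
  also have "\<dots> = (\<Sum>f\<in>F. p f + p f * \<mu>)"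
    unfolding \<mu>_def by (simp add: sum.distrib fin sum_distrib_left)
  also have "\<dots> = \<mu> + \<mu>^2"
    unfolding \<mu>_def by (simp add: sum.distrib sum_distrib_right power2_eq_square)
  finally have EX2le: "measure_pmf.expectation M (\<lambda>D. (X D)\<^sup>2) \<le> \<mu> + \<mu>^2" using EX2 by simp
  have var: "measure_pmf.variance M X \<le> \<mu>"
    using measure_pmf.variance_eq[OF X_int X2_int] EX EX2le by simp
  have mupos: "\<mu> > 0" using pos unfolding \<mu>_def p_def by simp
  have X_meas: "X \<in> borel_measurable (measure_pmf M)" by simp
  have cheb: "measure_pmf.prob M {x \<in> space (measure_pmf M). \<bar>X x - measure_pmf.expectation M X\<bar> \<ge> \<mu>/2}
      \<le> measure_pmf.variance M X / (\<mu>/2)\<^sup>2"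
    by (rule measure_pmf.Chebyshev_inequality[OF X_meas X2_int]) (use mupos in simp)
  have "{D. real (card (D \<inter> F)) < \<mu> / 2} \<subseteq> {x \<in> space (measure_pmf M). \<bar>X x - measure_pmf.expectation M X\<bar> \<ge> \<mu>/2}"
    using EX X_card by auto
  then have "measure_pmf.prob M {D. real (card (D \<inter> F)) < \<mu> / 2} \<le> measure_pmf.variance M X / (\<mu>/2)\<^sup>2"
    using cheb measure_pmf.finite_measure_mono[of "{D. real (card (D \<inter> F)) < \<mu> / 2}" "{x \<in> space (measure_pmf M). \<bar>X x - measure_pmf.expectation M X\<bar> \<ge> \<mu>/2}" M]
    by simp
  also have "\<dots> \<le> \<mu> / (\<mu>/2)\<^sup>2" using var mupos by (intro divide_right_mono) auto
  also have "\<dots> = 4 / \<mu>" using mupos by (simp add: power2_eq_square field_simps)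
  finally show ?thesis unfolding \<mu>_def p_def .
qed

lemma sum_from_prod:
  fixes s t x :: real
  assumes "s \<ge> 0" "t \<ge> 0" "x > 0" "s * t \<ge> 1 / (2 * x^2)"
  shows "s + t \<ge> 1 / x"
proof -
  have e: "(s+t)^2 = (s-t)^2 + 4*(s*t)" by (simp add: power2_eq_square algebra_simps)
  have h1: "(s + t)^2 \<ge> 4 * (s * t)" using e zero_le_power2[of "s-t"] by linarith
  have h2: "4 * (1 / (2 * x^2)) = 2 / x^2" by simp
  have h3: "(1/x)^2 = 1 / x^2" by (simp add: power_divide)
  have h4: "1 / x^2 \<le> 2 / x^2" using assms(3) by (intro divide_right_mono) auto
  have h5: "(1/x)^2 \<le> (s+t)^2" using h1 h2 h3 h4 assms(4) by linarith
  have h6: "0 \<le> s + t" using assms(1,2) by linarith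
  show ?thesis by (rule power2_le_imp_le[OF h5 h6])
qed

lemma prob_core:
  fixes I :: "'f set pmf" and G :: "'f set \<Rightarrow> ('u \<times> 'u) set" and S :: "'u \<Rightarrow> 'f set"
    and a b :: "nat \<Rightarrow> 'u"
  assumes fin: "\<And>D. D \<in> set_pmf I \<Longrightarrow> finite D"
    and pair: "\<And>f g. f \<in> \<Union>(set_pmf I) \<Longrightarrow> g \<in> \<Union>(set_pmf I) \<Longrightarrow> f \<noteq> g \<Longrightarrow>
       measure_pmf.prob I {D. f\<in>D \<and> g\<in>D} \<le> measure_pmf.prob I {D. f\<in>D} * measure_pmf.prob I {D. g\<in>D}"
    and Sdisj: "\<And>u w. u \<noteq> w \<Longrightarrow> S u \<inter> S w = {}"
    and anch: "\<And>D u w. D \<in> set_pmf I \<Longrightarrow> (u,w) \<in> G D \<Longrightarrow> D \<inter> S u \<noteq> {}"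
    and sym: "\<And>D u w. D \<in> set_pmf I \<Longrightarrow> (u,w) \<in> G D \<Longrightarrow> (w,u) \<in> G D"
    and dab: "\<And>i j. i \<ge> 1 \<Longrightarrow> j \<ge> 1 \<Longrightarrow> a i \<noteq> b j"
    and daa: "\<And>i j. i \<ge> 1 \<Longrightarrow> j \<ge> 1 \<Longrightarrow> i \<noteq> j \<Longrightarrow> a i \<noteq> a j"
    and dbb: "\<And>i j. i \<ge> 1 \<Longrightarrow> j \<ge> 1 \<Longrightarrow> i \<noteq> j \<Longrightarrow> b i \<noteq> b j"
    and margI: "\<And>i. i \<ge> 1 \<Longrightarrow> measure_pmf.prob I {D. (a i, b i) \<in> G D} = 1 / (real i)^2"
  shows False
proof -
  define pf where "pf f = measure_pmf.prob I {D. f \<in> D}" for f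
  have pf_nn: "pf f \<ge> 0" for f unfolding pf_def by simp
  have "\<forall>i. \<exists>W. i \<ge> 1 \<longrightarrow> finite W \<and> W \<subseteq> {D. (a i, b i) \<in> G D} \<inter> set_pmf I \<and>
      measure_pmf.prob I W > measure_pmf.prob I {D. (a i, b i) \<in> G D} - 1 / (2 * (real i)^2)"
  proof
    fix i
    show "\<exists>W. i \<ge> 1 \<longrightarrow> finite W \<and> W \<subseteq> {D. (a i, b i) \<in> G D} \<inter> set_pmf I \<and>
      measure_pmf.prob I W > measure_pmf.prob I {D. (a i, b i) \<in> G D} - 1 / (2 * (real i)^2)"
    proof (cases "i \<ge> 1")
      case True
      then have pos: "1 / (2 * (real i)^2) > 0" by simp
      obtain W where "finite W" "W \<subseteq> {D. (a i, b i) \<in> G D} \<inter> set_pmf I"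
        "measure_pmf.prob I W > measure_pmf.prob I {D. (a i, b i) \<in> G D} - 1 / (2 * (real i)^2)"
        using pmf_finite_approx[OF pos, of "{D. (a i, b i) \<in> G D}" I] by blast
      then show ?thesis by blast
    qed simp
  qed
  then obtain Wf where Wf0: "\<forall>i. i \<ge> 1 \<longrightarrow> finite (Wf i) \<and> Wf i \<subseteq> {D. (a i, b i) \<in> G D} \<inter> set_pmf I \<and>
      measure_pmf.prob I (Wf i) > measure_pmf.prob I {D. (a i, b i) \<in> G D} - 1 / (2 * (real i)^2)"
    by (rule choice[THEN exE])
  have Wf: "finite (Wf i) \<and> Wf i \<subseteq> {D. (a i, b i) \<in> G D} \<inter> set_pmf I \<and>
      measure_pmf.prob I (Wf i) > measure_pmf.prob I {D. (a i, b i) \<in> G D} - 1 / (2 * (real i)^2)" if "i \<ge> 1" for i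
    using Wf0 that by simp
  define SS where "SS i = S (a i) \<inter> \<Union>(Wf i)" for i
  define TT where "TT i = S (b i) \<inter> \<Union>(Wf i)" for i
  have finU: "finite (\<Union>(Wf i))" if "i \<ge> 1" for i
  proof (rule finite_Union)
    show "finite (Wf i)" using Wf[OF that] by simp
    show "finite D" if "D \<in> Wf i" for D using Wf[OF \<open>i \<ge> 1\<close>] that fin by blast
  qed
  have finSS: "finite (SS i)" and finTT: "finite (TT i)" if "i \<ge> 1" for i
    using finU[OF that] unfolding SS_def TT_def by (simp_all add: finite_Int)
  have subU: "\<Union>(Wf i) \<subseteq> \<Union>(set_pmf I)" if "i \<ge> 1" for i
  proof -
    have "Wf i \<subseteq> set_pmf I" using Wf[OF that] by simp
    then show ?thesis by (rule Union_mono)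
  qed
  have key: "sum pf (SS i) + sum pf (TT i) \<ge> 1 / real i" if i1: "i \<ge> 1" for i
  proof -
    have Wi: "finite (Wf i)" "Wf i \<subseteq> {D. (a i, b i) \<in> G D} \<inter> set_pmf I"
      "measure_pmf.prob I (Wf i) > measure_pmf.prob I {D. (a i, b i) \<in> G D} - 1 / (2 * (real i)^2)"
      using Wf[OF i1] by simp_all
    have P: "measure_pmf.prob I (Wf i) > 1 / (2 * (real i)^2)"
    proof -
      have "measure_pmf.prob I (Wf i) > 1 / (real i)^2 - 1 / (2 * (real i)^2)"
        using Wi(3) unfolding margI[OF i1] .
      moreover have "1 / (real i)^2 - 1 / (2 * (real i)^2) = 1 / (2 * (real i)^2)"
        using i1 by (simp add: field_simps)
      ultimately show ?thesis by linarith
    qed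
    have cover: "Wf i \<subseteq> (\<Union>fg\<in>SS i \<times> TT i. {D. fst fg \<in> D \<and> snd fg \<in> D})"
    proof
      fix D assume D: "D \<in> Wf i"
      then have DI: "D \<in> set_pmf I" and e: "(a i, b i) \<in> G D" using Wi(2) by blast+
      obtain f where f: "f \<in> D" "f \<in> S (a i)" using anch[OF DI e] by blast
      obtain g where g: "g \<in> D" "g \<in> S (b i)" using anch[OF DI sym[OF DI e]] by blast
      have "f \<in> SS i" unfolding SS_def using f D by blast
      moreover have "g \<in> TT i" unfolding TT_def using g D by blast
      ultimately have "(f,g) \<in> SS i \<times> TT i" by simp
      moreover have "D \<in> {D. fst (f,g) \<in> D \<and> snd (f,g) \<in> D}" using f g by simp
      ultimately show "D \<in> (\<Union>fg\<in>SS i \<times> TT i. {D. fst fg \<in> D \<and> snd fg \<in> D})" by blast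
    qed
    have "measure_pmf.prob I (Wf i) \<le> measure_pmf.prob I (\<Union>fg\<in>SS i \<times> TT i. {D. fst fg \<in> D \<and> snd fg \<in> D})"
      using cover by (rule measure_pmf.finite_measure_mono) simp
    also have "\<dots> \<le> (\<Sum>fg\<in>SS i \<times> TT i. measure_pmf.prob I {D. fst fg \<in> D \<and> snd fg \<in> D})"
      by (rule measure_pmf.finite_measure_subadditive_finite) (use finSS[OF i1] finTT[OF i1] in simp_all)
    also have "\<dots> \<le> (\<Sum>fg\<in>SS i \<times> TT i. pf (fst fg) * pf (snd fg))"
    proof (rule sum_mono)
      fix fg assume fg: "fg \<in> SS i \<times> TT i"
      then have m1: "fst fg \<in> S (a i)" and m2: "snd fg \<in> S (b i)" unfolding SS_def TT_def by auto
      have dj: "S (a i) \<inter> S (b i) = {}" by (rule Sdisj[OF dab[OF i1 i1]])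
      have ne: "fst fg \<noteq> snd fg"
      proof
        assume "fst fg = snd fg"
        then have "fst fg \<in> S (a i) \<inter> S (b i)" using m1 m2 by simp
        then show False using dj by simp
      qed
      have "fst fg \<in> \<Union>(Wf i)" "snd fg \<in> \<Union>(Wf i)" using fg unfolding SS_def TT_def by auto
      then have u: "fst fg \<in> \<Union>(set_pmf I)" "snd fg \<in> \<Union>(set_pmf I)" using subU[OF i1] by blast+
      show "measure_pmf.prob I {D. fst fg \<in> D \<and> snd fg \<in> D} \<le> pf (fst fg) * pf (snd fg)"
        unfolding pf_def by (rule pair[OF u ne])
    qed
    also have "\<dots> = sum pf (SS i) * sum pf (TT i)"
    proof -
      have "(\<Sum>fg\<in>SS i \<times> TT i. pf (fst fg) * pf (snd fg)) = (\<Sum>f\<in>SS i. \<Sum>g\<in>TT i. pf f * pf g)"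
        unfolding sum.cartesian_product' by simp
      also have "\<dots> = sum pf (SS i) * sum pf (TT i)" by (rule sum_product[symmetric])
      finally show ?thesis .
    qed
    finally have st: "sum pf (SS i) * sum pf (TT i) \<ge> 1 / (2 * (real i)^2)" using P by linarith
    have "sum pf (SS i) \<ge> 0" "sum pf (TT i) \<ge> 0" "real i > 0" using pf_nn i1 by (simp_all add: sum_nonneg)
    then show ?thesis using sum_from_prod st by blast
  qed
  obtain W0 where W0: "finite W0" "W0 \<subseteq> UNIV \<inter> set_pmf I" "measure_pmf.prob I W0 > measure_pmf.prob I UNIV - 1/2"
    using pmf_finite_approx[of "1/2" UNIV I] by auto
  have W0p: "measure_pmf.prob I W0 > 1/2" using W0(3) by simp
  define m0 where "m0 = (\<Sum>D\<in>W0. card D)"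
  have m0b: "card D \<le> m0" if "D \<in> W0" for D
    unfolding m0_def by (rule member_le_sum[OF that _ W0(1)]) simp
  obtain n where n: "harm n \<ge> (8 + 2 * real m0 :: real)"
  proof -
    have "eventually (\<lambda>n. harm n \<ge> (8 + 2 * real m0 :: real)) sequentially"
      using harm_at_top by (simp add: filterlim_at_top)
    then show ?thesis using that by (auto simp: eventually_sequentially)
  qed
  define F where "F = (\<Union>i\<in>{1..n}. SS i \<union> TT i)"
  have finF: "finite F" unfolding F_def using finSS finTT by auto
  have FU: "F \<subseteq> \<Union>(set_pmf I)"
  proof
    fix f assume "f \<in> F"
    then obtain i where i: "i \<in> {1..n}" "f \<in> SS i \<union> TT i" unfolding F_def by blast
    then have "f \<in> \<Union>(Wf i)" unfolding SS_def TT_def by blast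
    moreover have "i \<ge> 1" using i(1) by simp
    ultimately show "f \<in> \<Union>(set_pmf I)" using subU by blast
  qed
  have disjST: "SS i \<inter> TT i = {}" if "i \<ge> 1" for i
  proof -
    have "S (a i) \<inter> S (b i) = {}" by (rule Sdisj[OF dab[OF that that]])
    then show ?thesis unfolding SS_def TT_def by blast
  qed
  have disjF: "(SS i \<union> TT i) \<inter> (SS j \<union> TT j) = {}" if "i \<in> {1..n}" "j \<in> {1..n}" "i \<noteq> j" for i j
  proof -
    have i1: "i \<ge> 1" and j1: "j \<ge> 1" using that by auto
    have "S (a i) \<inter> S (a j) = {}" by (rule Sdisj[OF daa[OF i1 j1 that(3)]])
    moreover have "S (a i) \<inter> S (b j) = {}" by (rule Sdisj[OF dab[OF i1 j1]])
    moreover have "S (b i) \<inter> S (a j) = {}" by (rule Sdisj[OF not_sym[OF dab[OF j1 i1]]])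
    moreover have "S (b i) \<inter> S (b j) = {}" by (rule Sdisj[OF dbb[OF i1 j1 that(3)]])
    ultimately have e: "(S (a i) \<union> S (b i)) \<inter> (S (a j) \<union> S (b j)) = {}"
      by (simp add: Int_Un_distrib Int_Un_distrib2)
    have s1: "SS i \<union> TT i \<subseteq> S (a i) \<union> S (b i)" unfolding SS_def TT_def by blast
    have s2: "SS j \<union> TT j \<subseteq> S (a j) \<union> S (b j)" unfolding SS_def TT_def by blast
    show ?thesis using e s1 s2 by blast
  qed
  have sumF: "sum pf F = (\<Sum>i\<in>{1..n}. sum pf (SS i) + sum pf (TT i))"
  proof -
    have "sum pf F = (\<Sum>i\<in>{1..n}. sum pf (SS i \<union> TT i))"
      unfolding F_def using finSS finTT disjF by (intro sum.UNION_disjoint) auto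
    also have "\<dots> = (\<Sum>i\<in>{1..n}. sum pf (SS i) + sum pf (TT i))"
      using finSS finTT disjST by (intro sum.cong refl sum.union_disjoint) auto
    finally show ?thesis .
  qed
  have "sum pf F \<ge> (\<Sum>i\<in>{1..n}. 1 / real i)"
    unfolding sumF using key by (intro sum_mono) auto
  moreover have "(\<Sum>i\<in>{1..n}. 1 / real i) = harm n" unfolding harm_def by (simp add: divide_inverse)
  ultimately have muF: "sum pf F \<ge> 8 + 2 * real m0" using n by simp
  have pairF: "\<And>f g. f\<in>F \<Longrightarrow> g\<in>F \<Longrightarrow> f\<noteq>g \<Longrightarrow>
       measure_pmf.prob I {D. f\<in>D \<and> g\<in>D} \<le> measure_pmf.prob I {D. f\<in>D} * measure_pmf.prob I {D. g\<in>D}"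
    using pair FU by blast
  have posF: "(\<Sum>f\<in>F. measure_pmf.prob I {D. f\<in>D}) > 0" using muF unfolding pf_def by simp
  have SM: "measure_pmf.prob I {D. real (card (D \<inter> F)) < (\<Sum>f\<in>F. measure_pmf.prob I {D. f\<in>D}) / 2}
           \<le> 4 / (\<Sum>f\<in>F. measure_pmf.prob I {D. f\<in>D})"
    by (rule second_moment[OF finF pairF posF])
  have "W0 \<subseteq> {D. real (card (D \<inter> F)) < (\<Sum>f\<in>F. measure_pmf.prob I {D. f\<in>D}) / 2}"
  proof
    fix D assume D: "D \<in> W0"
    then have "finite D" using W0(2) fin by blast
    then have "card (D \<inter> F) \<le> card D" by (intro card_mono) auto
    also have "\<dots> \<le> m0" using m0b[OF D] .
    finally have "real (card (D \<inter> F)) \<le> real m0" by simp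
    also have "\<dots> < sum pf F / 2" using muF by simp
    finally show "D \<in> {D. real (card (D \<inter> F)) < (\<Sum>f\<in>F. measure_pmf.prob I {D. f\<in>D}) / 2}"
      unfolding pf_def by simp
  qed
  then have "measure_pmf.prob I W0 \<le> 4 / (\<Sum>f\<in>F. measure_pmf.prob I {D. f\<in>D})"
  proof -
    assume sub: "W0 \<subseteq> {D. real (card (D \<inter> F)) < (\<Sum>f\<in>F. measure_pmf.prob I {D. f\<in>D}) / 2}"
    have "measure_pmf.prob I W0 \<le> measure_pmf.prob I {D. real (card (D \<inter> F)) < (\<Sum>f\<in>F. measure_pmf.prob I {D. f\<in>D}) / 2}"
      by (rule measure_pmf.finite_measure_mono[OF sub]) simp
    then show ?thesis using SM by linarith
  qed
  also have "\<dots> \<le> 1/2" using muF unfolding pf_def by (simp add: divide_simps)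
  finally show False using W0p by simp
qed

lemma BID_pair:
  assumes bid: "is_BID sch ar I" and f: "f \<in> pdb_facts I" and g: "g \<in> pdb_facts I" and ne: "f \<noteq> g"
  shows "measure_pmf.prob I {D. f\<in>D \<and> g\<in>D} \<le> measure_pmf.prob I {D. f\<in>D} * measure_pmf.prob I {D. g\<in>D}"
proof -
  from bid obtain B where
    ind: "\<forall>fs. set fs \<subseteq> pdb_facts I \<and>
          (\<forall>i<length fs. \<forall>j<length fs. i \<noteq> j \<longrightarrow> \<not> (\<exists>X\<in>B. fs!i \<in> X \<and> fs!j \<in> X)) \<longrightarrow>
          measure_pmf.prob I {D. set fs \<subseteq> D}
            = prod_list (map (\<lambda>f. measure_pmf.prob I {D. f \<in> D}) fs)" and
    excl: "\<forall>X\<in>B. \<forall>f\<in>X. \<forall>f'\<in>X. f \<noteq> f' \<longrightarrow> measure_pmf.prob I {D. f \<in> D \<and> f' \<in> D} = 0"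
    unfolding is_BID_def by blast
  show ?thesis
  proof (cases "\<exists>X\<in>B. f\<in>X \<and> g\<in>X")
    case True
    then have "measure_pmf.prob I {D. f\<in>D \<and> g\<in>D} = 0" using excl ne by blast
    moreover have "measure_pmf.prob I {D. f\<in>D} * measure_pmf.prob I {D. g\<in>D} \<ge> 0" by simp
    ultimately show ?thesis by simp
  next
    case False
    have c: "\<forall>i<length [f,g]. \<forall>j<length [f,g]. i \<noteq> j \<longrightarrow> \<not> (\<exists>X\<in>B. [f,g]!i \<in> X \<and> [f,g]!j \<in> X)"
    proof (intro allI impI)
      fix i j assume "i < length [f,g]" "j < length [f,g]" "i \<noteq> j"
      then have "(i = 0 \<and> j = 1) \<or> (i = 1 \<and> j = 0)" by auto
      then show "\<not> (\<exists>X\<in>B. [f,g]!i \<in> X \<and> [f,g]!j \<in> X)"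
      proof (elim disjE conjE)
        assume "i = 0" "j = 1"
        then show ?thesis using False by simp
      next
        assume "i = 1" "j = 0"
        then have "[f,g]!i = g" "[f,g]!j = f" by simp_all
        then show ?thesis using False by metis
      qed
    qed
    have s: "set [f,g] \<subseteq> pdb_facts I" using f g by simp
    have pre: "set [f,g] \<subseteq> pdb_facts I \<and>
          (\<forall>i<length [f,g]. \<forall>j<length [f,g]. i \<noteq> j \<longrightarrow> \<not> (\<exists>X\<in>B. [f,g]!i \<in> X \<and> [f,g]!j \<in> X))"
      using s c by (rule conjI)
    have "measure_pmf.prob I {D. set [f,g] \<subseteq> D} = prod_list (map (\<lambda>f. measure_pmf.prob I {D. f \<in> D}) [f,g])"
      using mp[OF spec[OF ind, of "[f,g]"] pre] .
    moreover have "{D. set [f,g] \<subseteq> D} = {D. f\<in>D \<and> g\<in>D}" by auto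
    ultimately show ?thesis by simp
  qed
qed

lemma FREE_D: "FREE \<phi> Y \<Longrightarrow> c \<in> Dom \<Longrightarrow> cq_sat D Dom \<phi> v \<Longrightarrow> cq_sat D Dom \<phi> (upd_set v Y c)"
  unfolding FREE_def by blast

theorem lemma7p13:
  fixes a b :: "nat \<Rightarrow> 'u::{countable,infinite,linorder}"
    and D2 :: "('u \<times> 'u) set pmf"
  assumes two: "\<forall>i\<ge>1. a i \<noteq> b i"
    and disj: "\<forall>i\<ge>1. \<forall>j\<ge>1. i \<noteq> j \<longrightarrow> {a i, b i} \<inter> {a j, b j} = {}"
    and indep: "edge_indep_graph D2"
    and marg: "\<forall>i\<ge>1. measure_pmf.prob D2 {D. (a i, b i) \<in> D} = 1 / (real i)^2
                   \<and> measure_pmf.prob D2 {D. (b i, a i) \<in> D} = 1 / (real i)^2"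
    and marg0: "\<forall>u v. (\<forall>i\<ge>1. (u, v) \<noteq> (a i, b i) \<and> (u, v) \<noteq> (b i, a i))
                   \<longrightarrow> measure_pmf.prob D2 {D. (u, v) \<in> D} = 0"
  shows "\<not> (\<exists>(sch :: 'r set) (ar :: 'r \<Rightarrow> nat) (I :: ('r,'u) inst pmf) (\<Phi> :: ('r,'u) cq).
             finite sch \<and> is_BID sch ar I \<and> is_CQ_view_E sch ar \<Phi> \<and>
             map_pmf (cq_view_E \<Phi>) I = D2)"
proof
  assume "\<exists>(sch :: 'r set) (ar :: 'r \<Rightarrow> nat) (I :: ('r,'u) inst pmf) (\<Phi> :: ('r,'u) cq).
             finite sch \<and> is_BID sch ar I \<and> is_CQ_view_E sch ar \<Phi> \<and>
             map_pmf (cq_view_E \<Phi>) I = D2"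
  then obtain sch ar and I :: "('r,'u) inst pmf" and \<Phi> :: "('r,'u) cq" where
    bid: "is_BID sch ar I" and view: "is_CQ_view_E sch ar \<Phi>" and img: "map_pmf (cq_view_E \<Phi>) I = D2"
    by blast
  define G where "G = cq_view_E \<Phi>"
  define Dom where "Dom D = adom D \<union> cq_consts \<Phi>" for D :: "('r,'u) inst"
  define val where "val u w = ((\<lambda>_. undefined)(0 := u, 1 := w) :: nat \<Rightarrow> 'u)" for u w
  have Gdef: "(u,w) \<in> G D \<longleftrightarrow> u \<in> Dom D \<and> w \<in> Dom D \<and> cq_sat D (Dom D) \<Phi> (val u w)" for D u w
    unfolding G_def cq_view_E_def Dom_def val_def by simp
  have finw: "\<And>D. D \<in> set_pmf I \<Longrightarrow> finite D"
    using bid unfolding is_BID_def is_pdb_def is_instance_def by blast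
  have GD2: "G D \<in> set_pmf D2" if "D \<in> set_pmf I" for D
    using that img unfolding G_def by auto
  have D2w: "\<forall>E\<in>set_pmf D2. finite E \<and> (\<forall>(u,w)\<in>E. u \<noteq> w \<and> (w,u) \<in> E)"
    using indep unfolding edge_indep_graph_def by blast
  have noloop: "u \<noteq> w" if "D \<in> set_pmf I" "(u,w) \<in> G D" for D u w
    using D2w GD2[OF that(1)] that(2) by blast
  have sym: "(w,u) \<in> G D" if "D \<in> set_pmf I" "(u,w) \<in> G D" for D u w
    using D2w GD2[OF that(1)] that(2) by blast
  have margI: "measure_pmf.prob I {D. (a i, b i) \<in> G D} = 1 / (real i)^2" if "i \<ge> 1" for i
  proof -
    have "measure_pmf.prob D2 {E. (a i, b i) \<in> E} = 1 / (real i)^2" using marg that by blast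
    moreover have "measure_pmf.prob D2 {E. (a i, b i) \<in> E} = measure_pmf.prob I (G -` {E. (a i, b i) \<in> E})"
      unfolding img[symmetric] G_def by (rule measure_map_pmf)
    moreover have "G -` {E. (a i, b i) \<in> E} = {D. (a i, b i) \<in> G D}" by auto
    ultimately show ?thesis by simp
  qed
  have fv: "cq_fv \<Phi> \<subseteq> {0,1}" using view unfolding is_CQ_view_E_def by blast
  have ab1: "a 1 \<noteq> b 1" using two by simp
  obtain D1 where D1: "D1 \<in> set_pmf I" "(a 1, b 1) \<in> G D1"
  proof -
    have m1: "measure_pmf.prob I {D. (a 1, b 1) \<in> G D} = 1" using margI[of 1] by simp
    have "set_pmf I \<inter> {D. (a 1, b 1) \<in> G D} \<noteq> {}"
    proof
      assume "set_pmf I \<inter> {D. (a 1, b 1) \<in> G D} = {}"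
      then have "measure_pmf.prob I {D. (a 1, b 1) \<in> G D} = 0" by (rule measure_pmf_zero_iff[THEN iffD2])
      then show False using m1 by simp
    qed
    then show ?thesis using that by blast
  qed
  have D1' : "(b 1, a 1) \<in> G D1" by (rule sym[OF D1])
  from structure_lemma[of \<Phi> 0] show False
  proof (elim disjE)
    assume "CST \<Phi> 0"
    then obtain c where c: "\<forall>D Dom v. cq_sat D Dom \<Phi> v \<longrightarrow> v 0 = c" unfolding CST_def by blast
    have "val (a 1) (b 1) 0 = c" using c D1(2) unfolding Gdef by blast
    moreover have "val (b 1) (a 1) 0 = c" using c D1' unfolding Gdef by blast
    ultimately show False using ab1 unfolding val_def by simp
  next
    assume "FR \<Phi> 0"
    then obtain Y where Y: "0 \<in> Y" "FREE \<Phi> Y" unfolding FR_def by blast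
    have s: "cq_sat D1 (Dom D1) \<Phi> (val (a 1) (b 1))" "b 1 \<in> Dom D1" using D1(2) unfolding Gdef by blast+
    have s2: "cq_sat D1 (Dom D1) \<Phi> (upd_set (val (a 1) (b 1)) Y (b 1))"
      by (rule FREE_D[OF Y(2) s(2) s(1)])
    have "\<forall>z\<in>cq_fv \<Phi>. upd_set (val (a 1) (b 1)) Y (b 1) z = val (b 1) (b 1) z"
    proof
      fix z assume "z \<in> cq_fv \<Phi>"
      then have "z = 0 \<or> z = 1" using fv by blast
      then show "upd_set (val (a 1) (b 1)) Y (b 1) z = val (b 1) (b 1) z"
        using Y(1) unfolding upd_set_def val_def by auto
    qed
    then have "cq_sat D1 (Dom D1) \<Phi> (val (b 1) (b 1))" using s2 cq_sat_cong by metis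
    then have "(b 1, b 1) \<in> G D1" unfolding Gdef using s(2) by blast
    then show False using noloop[OF D1(1)] by blast
  next
    assume "ANC \<Phi> 0"
    then obtain R p where Rp: "\<forall>D Dom v. cq_sat D Dom \<Phi> v \<longrightarrow> (\<exists>us. (R,us)\<in>D \<and> p < length us \<and> us!p = v 0)"
      unfolding ANC_def by blast
    define S where "S u = {f :: ('r,'u) fact. p < length (snd f) \<and> snd f ! p = u}" for u
    show False
    proof (rule prob_core[where I = I and G = G and S = S and a = a and b = b])
      show "\<And>D. D \<in> set_pmf I \<Longrightarrow> finite D" by (rule finw)
      show "measure_pmf.prob I {D. f\<in>D \<and> g\<in>D} \<le> measure_pmf.prob I {D. f\<in>D} * measure_pmf.prob I {D. g\<in>D}"
        if "f \<in> \<Union>(set_pmf I)" "g \<in> \<Union>(set_pmf I)" "f \<noteq> g" for f g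
        using BID_pair[OF bid _ _ that(3)] that(1,2) unfolding pdb_facts_def by blast
      show "S u \<inter> S w = {}" if "u \<noteq> w" for u w using that unfolding S_def by auto
      show "D \<inter> S u \<noteq> {}" if "D \<in> set_pmf I" "(u,w) \<in> G D" for D u w
      proof -
        have "cq_sat D (Dom D) \<Phi> (val u w)" using that(2) unfolding Gdef by blast
        then obtain us where "(R,us)\<in>D" "p < length us" "us!p = val u w 0" using Rp by blast
        then have "(R,us) \<in> D \<inter> S u" unfolding S_def val_def by simp
        then show ?thesis by blast
      qed
      show "(w,u) \<in> G D" if "D \<in> set_pmf I" "(u,w) \<in> G D" for D u w by (rule sym[OF that])
      show "a i \<noteq> b j" if "i \<ge> 1" "j \<ge> 1" for i j
      proof (cases "i = j")
        case True
        have "a i \<noteq> b i" using two that(1) by simp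
        then show ?thesis using True by simp
      next
        case False
        have "{a i, b i} \<inter> {a j, b j} = {}" using disj that False by simp
        then show ?thesis by auto
      qed
      show "a i \<noteq> a j" if "i \<ge> 1" "j \<ge> 1" "i \<noteq> j" for i j
      proof -
        have "{a i, b i} \<inter> {a j, b j} = {}" using disj that by simp
        then show ?thesis by auto
      qed
      show "b i \<noteq> b j" if "i \<ge> 1" "j \<ge> 1" "i \<noteq> j" for i j
      proof -
        have "{a i, b i} \<inter> {a j, b j} = {}" using disj that by simp
        then show ?thesis by auto
      qed
      show "measure_pmf.prob I {D. (a i, b i) \<in> G D} = 1 / (real i)^2" if "i \<ge> 1" for i
        by (rule margI[OF that])
    qed
  qed
qed

end
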